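(* Let $d\ge 1$, $T\in\mathbb{Q}^d_{\ge 0}$, and let $\mathcal{V}_L\subseteq\mathbb{Q}^d_{\ge 0}$ be a finite set that is 3-incompatible with respect to $T$. Let $m$ be an integer with $|\mathcal{V}_L|/2\le m\le|\mathcal{V}_L|$ and set $C_2=|\mathcal{V}_L|-m$. Let $0\le p\le m$ and let $s(1),\dots,s(p)\in\mathbb{Q}^d_{\ge 0}$ with $s(i)\le T$ componentwise. Consider $m$ containers: for $i\in\{1,\dots,p\}$ a container of capacity $s(i)$, and $m-p$ further containers of capacity $T$. Let $\mathcal{C}=\{1,\dots,p\}$ if $p=m$, and $\mathcal{C}=\{1,\dots,p\}\cup\{\top\}$ with $s(\top)=T$ if $p<m$. Build the graph $G$ with vertex set $\mathcal{V}_L\cup\mathcal{V}_L'\cup\mathcal{B}$, where $\mathcal{V}_L'=\{v'\mid v\in\mathcal{V}_L\}$ is a set of new copies and $\mathcal{B}$ is a set of $2C_2$ new vertices; for each $c\in\mathcal{C}$ let $E_c=\{\{u,v\}\mid u\neq v\in\mathcal{V}_L,\ u+v\le s(c)\}\cup\{\{v,v'\}\mid v\in\mathcal{V}_L,\ v\le s(c)\}$ (inequalities componentwise), let $E_\bot=\{\{v',b\}\mid v'\in\mathcal{V}_L',b\in\mathcal{B}\}$, and $E(G)=E_\bot\cup\bigcup_{c\in\mathcal{C}}E_c$. Let the color set be $\mathcal{C}'=\mathcal{C}\cup\{\bot\}$ if $C_2>0$ and $\mathcal{C}'=\mathcal{C}$ if $C_2=0$, let $\lambda(e)=\{c\in\mathcal{C}'\mid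 e\in E_c\}$, $\gamma(e,c)=1$ for all $e$ and $c\in\lambda(e)$, and $\ell=|\mathcal{V}_L|+C_2$. Then there is an assignment of all vectors of $\mathcal{V}_L$ to the $m$ containers such that every container receives at least one vector and the sum of the vectors in each container is componentwise at most its capacity if and only if $(G,\mathcal{C}',\lambda,\gamma,\ell)$ is a "yes"-instance of Perfect Over-The-Rainbow Matching.
   Context: A set $\mathcal{V}'\subseteq\mathbb{Q}^d_{\ge 0}$ is 3-incompatible with respect to $T$ if for any three distinct $u,v,w\in\mathcal{V}'$ there is a coordinate $j$ with $u^j+v^j+w^j>T^j$. Perfect Over-The-Rainbow Matching: given a graph $G$, a color set $\mathcal{C}'$, $\lambda:E(G)\to 2^{\mathcal{C}'}\setminus\{\emptyset\}$, weights $\gamma(e,c)\ge 0$ for $c\in\lambda(e)$, and a number $\ell$, the instance is a "yes"-instance iff there exist a perfect matching $M$ of $G$ and a surjective map $\xi:M\to\mathcal{C}'$ with $\xi(e)\in\lambda(e)$ for all $e\in M$ and $\sum_{e\in M}\gamma(e,\xi(e))\le\ell$. *)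

theory Defs
  imports Main "HOL.Rat"
begin

section \<open>Vectors in Q^d as lists of length d\<close>

definition vec_nonneg :: "nat \<Rightarrow> rat list \<Rightarrow> bool" where
  "vec_nonneg d v \<longleftrightarrow> length v = d \<and> (\<forall>j<d. 0 \<le> v ! j)"

definition vle :: "nat \<Rightarrow> rat list \<Rightarrow> rat list \<Rightarrow> bool" where
  "vle d u v \<longleftrightarrow> (\<forall>j<d. u ! j \<le> v ! j)"

definition vadd :: "nat \<Rightarrow> rat list \<Rightarrow> rat list \<Rightarrow> rat list" where
  "vadd d u v = map (\<lambda>j. u ! j + v ! j) [0..<d]"

definition vsum :: "nat \<Rightarrow> rat list set \<Rightarrow> rat list" where
  "vsum d S = map (\<lambda>j. \<Sum>v\<in>S. v ! j) [0..<d]"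

definition three_incompatible :: "nat \<Rightarrow> rat list set \<Rightarrow> rat list \<Rightarrow> bool" where
  "three_incompatible d V T \<longleftrightarrow>
     (\<forall>u\<in>V. \<forall>v\<in>V. \<forall>w\<in>V. u \<noteq> v \<and> u \<noteq> w \<and> v \<noteq> w \<longrightarrow>
        (\<exists>j<d. u ! j + v ! j + w ! j > T ! j))"

text \<open>A graph is given by its vertex set and its set of edges (2-element vertex sets).\<close>
definition perfect_matching :: "'v set \<Rightarrow> 'v set set \<Rightarrow> 'v set set \<Rightarrow> bool" where
  "perfect_matching Vs E M \<longleftrightarrow> M \<subseteq> E \<and>
     (\<forall>e\<in>M. \<forall>e'\<in>M. e \<noteq> e' \<longrightarrow> e \<inter> e' = {}) \<and> \<Union>M = Vs"

definition otr_yes :: "'v set \<Rightarrow> 'v set set \<Rightarrow> 'c set \<Rightarrow> ('v set \<Rightarrow> 'c set)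
      \<Rightarrow> ('v set \<Rightarrow> 'c \<Rightarrow> rat) \<Rightarrow> rat \<Rightarrow> bool" where
  "otr_yes Vs E Cs lam gam ell \<longleftrightarrow>
     (\<exists>M \<xi>. perfect_matching Vs E M \<and> (\<forall>e\<in>M. \<xi> e \<in> lam e) \<and> \<xi> ` M = Cs \<and>
        (\<Sum>e\<in>M. gam e (\<xi> e)) \<le> ell)"

datatype vert = Orig "rat list" | Copy "rat list" | Bv nat
datatype color = Col nat | Top | Bot

definition cap :: "rat list \<Rightarrow> (nat \<Rightarrow> rat list) \<Rightarrow> color \<Rightarrow> rat list" where
  "cap T s c = (case c of Col i \<Rightarrow> s i | _ \<Rightarrow> T)"

definition colorsC :: "nat \<Rightarrow> nat \<Rightarrow> color set" where
  "colorsC m p = Col ` {1..p} \<union> (if p < m then {Top} else {})"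

definition Bset :: "nat \<Rightarrow> vert set" where
  "Bset C2 = Bv ` {..<2 * C2}"

definition vertsG :: "rat list set \<Rightarrow> nat \<Rightarrow> vert set" where
  "vertsG V C2 = Orig ` V \<union> Copy ` V \<union> Bset C2"

definition E_col :: "nat \<Rightarrow> rat list set \<Rightarrow> rat list \<Rightarrow> (nat \<Rightarrow> rat list) \<Rightarrow> color \<Rightarrow> vert set set" where
  "E_col d V T s c =
     {{Orig u, Orig v} | u v. u \<in> V \<and> v \<in> V \<and> u \<noteq> v \<and> vle d (vadd d u v) (cap T s c)}
     \<union> {{Orig v, Copy v} | v. v \<in> V \<and> vle d v (cap T s c)}"

definition E_bot :: "rat list set \<Rightarrow> nat \<Rightarrow> vert set set" where
  "E_bot V C2 = {{Copy v, b} | v b. v \<in> V \<and> b \<in> Bset C2}"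

definition Ec :: "nat \<Rightarrow> rat list set \<Rightarrow> rat list \<Rightarrow> (nat \<Rightarrow> rat list) \<Rightarrow> nat \<Rightarrow> color \<Rightarrow> vert set set" where
  "Ec d V T s C2 c = (if c = Bot then E_bot V C2 else E_col d V T s c)"

definition edgesG :: "nat \<Rightarrow> rat list set \<Rightarrow> rat list \<Rightarrow> (nat \<Rightarrow> rat list) \<Rightarrow> nat \<Rightarrow> nat \<Rightarrow> nat \<Rightarrow> vert set set" where
  "edgesG d V T s m p C2 = E_bot V C2 \<union> (\<Union>c\<in>colorsC m p. E_col d V T s c)"

definition colorsC' :: "nat \<Rightarrow> nat \<Rightarrow> nat \<Rightarrow> color set" where
  "colorsC' m p C2 = colorsC m p \<union> (if C2 > 0 then {Bot} else {})"

definition lamG :: "nat \<Rightarrow> rat list set \<Rightarrow> rat list \<Rightarrow> (nat \<Rightarrow> rat list) \<Rightarrow> nat \<Rightarrow> nat \<Rightarrow> nat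
     \<Rightarrow> vert set \<Rightarrow> color set" where
  "lamG d V T s m p C2 e = {c \<in> colorsC' m p C2. e \<in> Ec d V T s C2 c}"

definition container_cap :: "rat list \<Rightarrow> (nat \<Rightarrow> rat list) \<Rightarrow> nat \<Rightarrow> nat \<Rightarrow> rat list" where
  "container_cap T s p k = (if k \<le> p then s k else T)"

definition feasible_assignment :: "nat \<Rightarrow> rat list set \<Rightarrow> rat list \<Rightarrow> (nat \<Rightarrow> rat list) \<Rightarrow> nat \<Rightarrow> nat \<Rightarrow> bool" where
  "feasible_assignment d V T s m p \<longleftrightarrow>
     (\<exists>f. (\<forall>v\<in>V. f v \<in> {1..m}) \<and> f ` V = {1..m} \<and>
          (\<forall>k\<in>{1..m}. vle d (vsum d {v\<in>V. f v = k}) (container_cap T s p k)))"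

end

theory Submission
  imports Defs
begin


lemma vsum_nth: "j < d \<Longrightarrow> vsum d S ! j = (\<Sum>v\<in>S. v ! j)"
  by (simp add: vsum_def)

lemma vadd_nth: "j < d \<Longrightarrow> vadd d u v ! j = u ! j + v ! j"
  by (simp add: vadd_def)

lemma vle_trans: "vle d a b \<Longrightarrow> vle d b c \<Longrightarrow> vle d a c"
  unfolding vle_def by (meson order_trans)

lemma vle_refl: "vle d a a"
  unfolding vle_def by simp

lemma vle_single: "vle d (vsum d {v}) c \<longleftrightarrow> vle d v c"
  unfolding vle_def by (simp add: vsum_nth)

lemma vle_pair: "u \<noteq> v \<Longrightarrow> vle d (vsum d {u,v}) c \<longleftrightarrow> vle d (vadd d u v) c"
  unfolding vle_def by (simp add: vsum_nth vadd_nth)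

lemma group_card_le2:
  assumes ti: "three_incompatible d V T" and nn: "\<forall>v\<in>V. vec_nonneg d v"
    and G: "G \<subseteq> V" "finite G" and le: "vle d (vsum d G) c" and cT: "vle d c T"
  shows "card G \<le> 2"
proof (rule ccontr)
  assume "\<not> card G \<le> 2"
  then have "3 \<le> card G" by simp
  then obtain S where S: "S \<subseteq> G" "card S = 3" "finite S" by (rule obtain_subset_with_card_n)
  then obtain x y z where xyz: "S = {x,y,z}" "x \<noteq> y" "y \<noteq> z" "x \<noteq> z" by (auto simp: card_3_iff)
  have inV: "x \<in> V" "y \<in> V" "z \<in> V" using S G xyz by auto
  then obtain j where j: "j < d" "x ! j + y ! j + z ! j > T ! j"
    using ti xyz unfolding three_incompatible_def by blast
  have "x ! j + y ! j + z ! j = (\<Sum>v\<in>S. v ! j)" using xyz by (simp add: add.assoc)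
  also have "\<dots> \<le> (\<Sum>v\<in>G. v ! j)"
    by (rule sum_mono2) (use G S nn j in \<open>auto simp: vec_nonneg_def\<close>)
  also have "\<dots> = vsum d G ! j" using j by (simp add: vsum_nth)
  also have "\<dots> \<le> c ! j" using le j by (simp add: vle_def)
  also have "\<dots> \<le> T ! j" using cT j by (simp add: vle_def)
  finally show False using j by simp
qed

lemma E_col_cases:
  assumes "e \<in> E_col d V T s c"
  obtains u v where "e = {Orig u, Orig v}" "u \<in> V" "v \<in> V" "u \<noteq> v" "vle d (vadd d u v) (cap T s c)"
  | v where "e = {Orig v, Copy v}" "v \<in> V" "vle d v (cap T s c)"
  using assms unfolding E_col_def by blast

lemma E_col_I1: "u \<in> V \<Longrightarrow> v \<in> V \<Longrightarrow> u \<noteq> v \<Longrightarrow> vle d (vadd d u v) (cap T s c) \<Longrightarrow> {Orig u, Orig v} \<in> E_col d V T s c"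
  unfolding E_col_def by blast

lemma E_col_I2: "v \<in> V \<Longrightarrow> vle d v (cap T s c) \<Longrightarrow> {Orig v, Copy v} \<in> E_col d V T s c"
  unfolding E_col_def by blast

lemma E_bot_I: "v \<in> V \<Longrightarrow> b \<in> Bset C2 \<Longrightarrow> {Copy v, b} \<in> E_bot V C2"
  unfolding E_bot_def by blast



lemma fwd:
  assumes fin: "finite V" and nn: "\<forall>v\<in>V. vec_nonneg d v" and ti: "three_incompatible d V T"
    and m1: "card V \<le> 2 * m" and m2: "m \<le> card V" and pm: "p \<le> m"
    and sT: "\<forall>i\<in>{1..p}. vec_nonneg d (s i) \<and> vle d (s i) T"
    and f1: "\<forall>v\<in>V. f v \<in> {1..m}" and f2: "f ` V = {1..m}"
    and f3: "\<forall>k\<in>{1..m}. vle d (vsum d {v\<in>V. f v = k}) (container_cap T s p k)"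
  shows "otr_yes (vertsG V (card V - m)) (edgesG d V T s m p (card V - m))
                 (colorsC' m p (card V - m)) (lamG d V T s m p (card V - m))
                 (\<lambda>e c. 1) (of_nat (card V + (card V - m)))"
proof -
  define C2 where "C2 = card V - m"
  define G where "G k = {v\<in>V. f v = k}" for k
  have Gfin: "finite (G k)" for k using fin by (simp add: G_def)
  have GV: "G k \<subseteq> V" for k by (auto simp: G_def)
  have Gne: "G k \<noteq> {}" if "k \<in> {1..m}" for k
  proof -
    have "k \<in> f ` V" using f2 that by simp
    then obtain v where "v \<in> V" "f v = k" by blast
    then show ?thesis by (auto simp: G_def)
  qed
  have capT: "vle d (container_cap T s p k) T" if "k \<in> {1..m}" for k
    using sT that by (auto simp: container_cap_def vle_refl)
  have Gle2: "card (G k) \<le> 2" if "k \<in> {1..m}" for k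
    using group_card_le2[OF ti nn GV Gfin _ capT[OF that]] f3 that by (simp add: G_def)
  have Gcard: "card (G k) = 1 \<or> card (G k) = 2" if "k \<in> {1..m}" for k
    using Gle2[OF that] Gne[OF that] Gfin[of k] by (cases "card (G k)") (auto simp: card_eq_0_iff)
  have VU: "V = (\<Union>k\<in>{1..m}. G k)" using f1 by (auto simp: G_def)
  have sumG: "(\<Sum>k\<in>{1..m}. card (G k)) = card V"
    unfolding VU by (rule card_UN_disjoint[symmetric]) (auto simp: Gfin[unfolded G_def] G_def)
  define P where "P = {k\<in>{1..m}. card (G k) = 2}"
  have "(\<Sum>k\<in>{1..m}. card (G k)) = (\<Sum>k\<in>{1..m}. 1 + of_bool (k \<in> P))"
    by (rule sum.cong) (use Gcard in \<open>auto simp: P_def\<close>)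
  also have "\<dots> = m + card P"
  proof -
    have "{1..m} \<inter> {k. k \<in> P} = P" by (auto simp: P_def)
    moreover have "(\<Sum>k\<in>{1..m}. of_bool (k \<in> P)) = card ({1..m} \<inter> {k. k \<in> P})"
      using sum_of_bool_eq[of "{1..m}" "\<lambda>k. k \<in> P", where 'a=nat] by simp
    ultimately show ?thesis unfolding sum.distrib by simp
  qed
  finally have cardP: "card P = C2" using sumG by (simp add: C2_def)
  define W where "W = {v\<in>V. card (G (f v)) = 2}"
  have WU: "W = (\<Union>k\<in>P. G k)" using f1 by (auto simp: W_def P_def G_def)
  have finP: "finite P" by (simp add: P_def)
  have cardW: "card W = 2 * C2"
  proof -
    have "card W = (\<Sum>k\<in>P. card (G k))"
      unfolding WU by (rule card_UN_disjoint) (auto simp: finP Gfin[unfolded G_def] G_def)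
    also have "\<dots> = (\<Sum>k\<in>P. 2)" by (rule sum.cong) (auto simp: P_def)
    finally show ?thesis using cardP by simp
  qed
  have finW: "finite W" using fin by (simp add: W_def)
  obtain \<beta> where bij: "bij_betw \<beta> W {..<2*C2}"
    using finite_same_card_bij[OF finW, of "{..<2*C2}"] cardW by auto
  define ek where "ek k = (if card (G k) = 1 then Orig ` G k \<union> Copy ` G k else Orig ` G k)" for k
  define Mc where "Mc = ek ` {1..m}"
  define Mb where "Mb = (\<lambda>v. {Copy v, Bv (\<beta> v)}) ` W"
  define M where "M = Mc \<union> Mb"
  define colk where "colk k = (if k \<le> p then Col k else Top)" for k
  define \<xi> where "\<xi> e = (if e \<in> Mc then colk (SOME k. k\<in>{1..m} \<and> e = ek k) else Bot)" for e
  have Orig_ek: "Orig v \<in> ek k \<longleftrightarrow> v \<in> G k" for v k by (auto simp: ek_def)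
  have Copy_ek: "Copy v \<in> ek k \<longleftrightarrow> card (G k) = 1 \<and> v \<in> G k" for v k by (auto simp: ek_def)
  have Bv_ek: "Bv i \<notin> ek k" for i k by (auto simp: ek_def)
  have ek_cases: "x \<in> ek k \<Longrightarrow> (\<exists>v\<in>G k. x = Orig v \<or> x = Copy v)" for x k
    by (auto simp: ek_def split: if_splits)
  have colk_cap: "cap T s (colk k) = container_cap T s p k" for k
    by (simp add: colk_def cap_def container_cap_def)
  have colk_C: "colk k \<in> colorsC m p" if "k \<in> {1..m}" for k
    using that by (auto simp: colk_def colorsC_def)
  have colk_nb: "colk k \<noteq> Bot" for k by (simp add: colk_def)
  have ek_E: "ek k \<in> E_col d V T s (colk k)" if k: "k \<in> {1..m}" for k
  proof (cases "card (G k) = 1")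
    case True
    then obtain v where v: "G k = {v}" by (rule card_1_singletonE)
    then have "v \<in> V" using GV by auto
    moreover have "vle d v (cap T s (colk k))"
    proof -
      have "vle d (vsum d (G k)) (container_cap T s p k)" using f3 k by (simp add: G_def)
      then show ?thesis using v by (simp add: colk_cap vle_single)
    qed
    moreover have "ek k = {Orig v, Copy v}" using True v by (auto simp: ek_def)
    ultimately show ?thesis by (simp add: E_col_I2)
  next
    case False
    then have "card (G k) = 2" using Gcard k by auto
    then obtain u v where uv: "G k = {u,v}" "u \<noteq> v" by (auto simp: card_2_iff)
    then have "u \<in> V" "v \<in> V" using GV by auto
    moreover have "vle d (vadd d u v) (cap T s (colk k))"
    proof -
      have "vle d (vsum d (G k)) (container_cap T s p k)" using f3 k by (simp add: G_def)
      then show ?thesis using uv by (simp add: colk_cap vle_pair)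
    qed
    moreover have "ek k = {Orig u, Orig v}" using False uv by (simp add: ek_def)
    ultimately show ?thesis using uv by (simp add: E_col_I1)
  qed
  have ek_inj: "k = k'" if kk: "k \<in> {1..m}" "k' \<in> {1..m}" "ek k = ek k'" for k k'
  proof -
    obtain v where "v \<in> G k" using Gne kk by blast
    then have "v \<in> G k'" using kk Orig_ek by blast
    then show ?thesis using \<open>v \<in> G k\<close> by (simp add: G_def)
  qed
  have xi_ek: "\<xi> (ek k) = colk k" if "k \<in> {1..m}" for k
  proof -
    have "(SOME k'. k'\<in>{1..m} \<and> ek k = ek k') = k"
    proof (rule some_equality)
      show "k \<in> {1..m} \<and> ek k = ek k" using that by simp
    next
      fix k' assume "k' \<in> {1..m} \<and> ek k = ek k'"
      then show "k' = k" using ek_inj[OF that] by metis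
    qed
    then show ?thesis using that by (simp add: \<xi>_def Mc_def)
  qed
  have Mb_nMc: "e \<notin> Mc" if eMb: "e \<in> Mb" for e
  proof
    assume "e \<in> Mc"
    then obtain k where "e = ek k" by (auto simp: Mc_def)
    moreover obtain v where "e = {Copy v, Bv (\<beta> v)}" using eMb by (auto simp: Mb_def)
    ultimately have "Bv (\<beta> v) \<in> ek k" by (metis insertCI)
    then show False using Bv_ek by blast
  qed
  have xi_Mb: "\<xi> e = Bot" if "e \<in> Mb" for e using Mb_nMc[OF that] by (simp add: \<xi>_def)
  have WV: "W \<subseteq> V" by (auto simp: W_def)
  have C2pos: "C2 > 0" if "Mb \<noteq> {}" using that cardW finW by (auto simp: Mb_def)
  have pm_match: "perfect_matching (vertsG V C2) (edgesG d V T s m p C2) M"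
    unfolding perfect_matching_def
  proof (intro conjI)
    show "M \<subseteq> edgesG d V T s m p C2"
    proof
      fix e assume "e \<in> M"
      then consider (c) k where "k \<in> {1..m}" "e = ek k" | (b) v where "v \<in> W" "e = {Copy v, Bv (\<beta> v)}"
        by (auto simp: M_def Mc_def Mb_def)
      then show "e \<in> edgesG d V T s m p C2"
      proof cases
        case c
        have "ek k \<in> (\<Union>c\<in>colorsC m p. E_col d V T s c)" using ek_E[OF c(1)] colk_C[OF c(1)] by blast
        then show ?thesis by (simp add: edgesG_def c(2))
      next
        case b
        then have "\<beta> v < 2 * C2" using bij by (auto simp: bij_betw_def)
        then have "{Copy v, Bv (\<beta> v)} \<in> E_bot V C2" using b WV by (intro E_bot_I) (auto simp: Bset_def)
        then show ?thesis using b unfolding edgesG_def by blast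
      qed
    qed
  next
    show "\<forall>e\<in>M. \<forall>e'\<in>M. e \<noteq> e' \<longrightarrow> e \<inter> e' = {}"
    proof (intro ballI impI)
      fix e e' assume e: "e \<in> M" and e': "e' \<in> M" and ne: "e \<noteq> e'"
      show "e \<inter> e' = {}"
      proof (rule ccontr)
        assume "e \<inter> e' \<noteq> {}"
        then obtain x where x: "x \<in> e" "x \<in> e'" by blast
        consider (cc) k k' where "k \<in> {1..m}" "e = ek k" "k' \<in> {1..m}" "e' = ek k'"
          | (cb) k v where "k \<in> {1..m}" "e = ek k" "v \<in> W" "e' = {Copy v, Bv (\<beta> v)}"
          | (bc) k v where "k \<in> {1..m}" "e' = ek k" "v \<in> W" "e = {Copy v, Bv (\<beta> v)}"
          | (bb) v w where "v \<in> W" "e = {Copy v, Bv (\<beta> v)}" "w \<in> W" "e' = {Copy w, Bv (\<beta> w)}"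
          using e e' by (auto simp: M_def Mc_def Mb_def)
        then show False
        proof cases
          case cc
          then obtain v where "v \<in> G k" "x = Orig v \<or> x = Copy v" using ek_cases x by blast
          then have "v \<in> G k'" using x cc Orig_ek Copy_ek by blast
          then show False using cc ne \<open>v \<in> G k\<close> by (auto simp: G_def)
        next
          case cb
          then have "x = Copy v" using x Bv_ek by auto
          then have "card (G k) = 1" "v \<in> G k" using x cb Copy_ek by auto
          then show False using cb by (auto simp: W_def G_def)
        next
          case bc
          then have "x = Copy v" using x Bv_ek by auto
          then have "card (G k) = 1" "v \<in> G k" using x bc Copy_ek by auto
          then show False using bc by (auto simp: W_def G_def)
        next
          case bb
          then have "v \<noteq> w" using ne by auto
          then have "\<beta> v \<noteq> \<beta> w" using bij bb by (auto simp: bij_betw_def inj_on_def)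
          then show False using x bb \<open>v \<noteq> w\<close> by auto
        qed
      qed
    qed
  next
    show "\<Union>M = vertsG V C2"
    proof
      show "\<Union>M \<subseteq> vertsG V C2"
      proof
        fix x assume "x \<in> \<Union>M"
        then obtain e where "e \<in> M" "x \<in> e" by blast
        then consider (c) k where "k \<in> {1..m}" "x \<in> ek k" | (b) v where "v \<in> W" "x \<in> {Copy v, Bv (\<beta> v)}"
          by (auto simp: M_def Mc_def Mb_def)
        then show "x \<in> vertsG V C2"
        proof cases
          case c then show ?thesis using ek_cases GV by (fastforce simp: vertsG_def)
        next
          case b
          then have "\<beta> v < 2 * C2" using bij by (auto simp: bij_betw_def)
          then show ?thesis using b WV by (auto simp: vertsG_def Bset_def)
        qed
      qed
    next
      show "vertsG V C2 \<subseteq> \<Union>M"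
      proof
        fix x assume x: "x \<in> vertsG V C2"
        then consider (o) v where "v \<in> V" "x = Orig v" | (c) v where "v \<in> V" "x = Copy v"
          | (b) i where "i < 2 * C2" "x = Bv i"
          by (auto simp: vertsG_def Bset_def)
        then show "x \<in> \<Union>M"
        proof cases
          case o
          then have "x \<in> ek (f v)" "f v \<in> {1..m}" using f1 Orig_ek by (auto simp: G_def)
          then show ?thesis by (auto simp: M_def Mc_def)
        next
          case c
          show ?thesis
          proof (cases "card (G (f v)) = 1")
            case True
            then have "x \<in> ek (f v)" "f v \<in> {1..m}" using f1 Copy_ek c by (auto simp: G_def)
            then show ?thesis by (auto simp: M_def Mc_def)
          next
            case False
            then have "v \<in> W" using Gcard f1 c by (auto simp: W_def)
            then show ?thesis using c by (auto simp: M_def Mb_def)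
          qed
        next
          case b
          then have "i \<in> \<beta> ` W" using bij by (simp add: bij_betw_def)
          then obtain v where "v \<in> W" "\<beta> v = i" by blast
          then show ?thesis using b by (auto simp: M_def Mb_def)
        qed
      qed
    qed
  qed
  have xi_lam: "\<forall>e\<in>M. \<xi> e \<in> lamG d V T s m p C2 e"
  proof
    fix e assume "e \<in> M"
    then consider (c) k where "k \<in> {1..m}" "e = ek k" | (b) "e \<in> Mb"
      by (auto simp: M_def Mc_def)
    then show "\<xi> e \<in> lamG d V T s m p C2 e"
    proof cases
      case c
      then show ?thesis using xi_ek colk_C ek_E colk_nb
        by (auto simp: lamG_def colorsC'_def Ec_def)
    next
      case b
      then obtain v where "v \<in> W" "e = {Copy v, Bv (\<beta> v)}" by (auto simp: Mb_def)
      moreover have "\<beta> v < 2 * C2" using bij \<open>v \<in> W\<close> by (auto simp: bij_betw_def)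
      moreover have "C2 > 0" using C2pos b by auto
      ultimately show ?thesis using b xi_Mb WV
        by (auto simp: lamG_def colorsC'_def Ec_def E_bot_def Bset_def)
    qed
  qed
  have xi_img: "\<xi> ` M = colorsC' m p C2"
  proof
    show "\<xi> ` M \<subseteq> colorsC' m p C2"
    proof
      fix c assume "c \<in> \<xi> ` M"
      then obtain e where "e \<in> M" "c = \<xi> e" by blast
      then have "c \<in> lamG d V T s m p C2 e" using xi_lam by blast
      then show "c \<in> colorsC' m p C2" by (simp add: lamG_def)
    qed
  next
    show "colorsC' m p C2 \<subseteq> \<xi> ` M"
    proof
      fix c assume c: "c \<in> colorsC' m p C2"
      then consider (col) i where "i \<in> {1..p}" "c = Col i" | (top) "p < m" "c = Top" | (bot) "C2 > 0" "c = Bot"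
        by (auto simp: colorsC'_def colorsC_def split: if_splits)
      then show "c \<in> \<xi> ` M"
      proof cases
        case col
        then have "i \<in> {1..m}" using pm by auto
        then have "\<xi> (ek i) = c" "ek i \<in> M" using xi_ek col by (auto simp: colk_def M_def Mc_def)
        then show ?thesis by (metis imageI)
      next
        case top
        then have "m \<in> {1..m}" by auto
        then have "\<xi> (ek m) = c" "ek m \<in> M" using xi_ek top by (auto simp: colk_def M_def Mc_def)
        then show ?thesis by (metis imageI)
      next
        case bot
        then have "W \<noteq> {}" using cardW by auto
        then obtain v where "v \<in> W" by blast
        then have "{Copy v, Bv (\<beta> v)} \<in> Mb" by (auto simp: Mb_def)
        moreover have "\<xi> {Copy v, Bv (\<beta> v)} = c" using xi_Mb bot calculation by simp
        ultimately show ?thesis unfolding M_def by (metis UnI2 imageI)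
      qed
    qed
  qed
  have cost: "(\<Sum>e\<in>M. (1::rat)) \<le> of_nat (card V + C2)"
  proof -
    have "card M \<le> card Mc + card Mb" unfolding M_def by (rule card_Un_le)
    also have "\<dots> \<le> m + card W" unfolding Mc_def Mb_def
      using card_image_le[of "{1..m}" ek] card_image_le[OF finW, of "\<lambda>v. {Copy v, Bv (\<beta> v)}"] by simp
    also have "\<dots> = card V + C2" using cardW m1 m2 by (simp add: C2_def)
    finally show ?thesis by simp
  qed
  show ?thesis unfolding otr_yes_def C2_def[symmetric]
    by (rule exI[of _ M], rule exI[of _ \<xi>]) (use pm_match xi_lam xi_img cost in simp)
qed



lemma bwd:
  assumes fin: "finite V" and nn: "\<forall>v\<in>V. vec_nonneg d v"
    and m1: "card V \<le> 2 * m" and m2: "m \<le> card V" and pm: "p \<le> m"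
    and sT: "\<forall>i\<in>{1..p}. vec_nonneg d (s i) \<and> vle d (s i) T"
    and yes: "otr_yes (vertsG V (card V - m)) (edgesG d V T s m p (card V - m))
                 (colorsC' m p (card V - m)) (lamG d V T s m p (card V - m))
                 (\<lambda>e c. 1) (of_nat (card V + (card V - m)))"
  shows "feasible_assignment d V T s m p"
proof -
  define C2 where "C2 = card V - m"
  define Vs where "Vs = vertsG V C2"
  obtain M \<xi> where PM: "perfect_matching Vs (edgesG d V T s m p C2) M"
    and xl: "\<forall>e\<in>M. \<xi> e \<in> lamG d V T s m p C2 e" and xi: "\<xi> ` M = colorsC' m p C2"
    using yes unfolding otr_yes_def C2_def[symmetric] Vs_def[symmetric] by blast
  have ME: "M \<subseteq> edgesG d V T s m p C2" and Mdisj: "\<forall>e\<in>M. \<forall>e'\<in>M. e \<noteq> e' \<longrightarrow> e \<inter> e' = {}"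
    and MU: "\<Union>M = Vs" using PM by (auto simp: perfect_matching_def)
  have finVs: "finite Vs" using fin by (simp add: Vs_def vertsG_def Bset_def)
  have finM: "finite M" using MU finVs by (metis Union_upper finite_UnionD)
  have edge_cases: "P" if "e \<in> edgesG d V T s m p C2"
      "\<And>v b. e = {Copy v, b} \<Longrightarrow> v \<in> V \<Longrightarrow> b \<in> Bset C2 \<Longrightarrow> P"
      "\<And>c u v. c \<in> colorsC m p \<Longrightarrow> e \<in> E_col d V T s c \<Longrightarrow> e = {Orig u, Orig v} \<Longrightarrow> u \<in> V \<Longrightarrow> v \<in> V \<Longrightarrow> u \<noteq> v \<Longrightarrow> P"
      "\<And>c v. c \<in> colorsC m p \<Longrightarrow> e \<in> E_col d V T s c \<Longrightarrow> e = {Orig v, Copy v} \<Longrightarrow> v \<in> V \<Longrightarrow> P"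
    for e P
  proof -
    from that(1) consider (b) "e \<in> E_bot V C2" | (c) c where "c \<in> colorsC m p" "e \<in> E_col d V T s c"
      unfolding edgesG_def by blast
    then show P
    proof cases
      case b then show ?thesis using that(2) unfolding E_bot_def by blast
    next
      case c
      from c(2) show ?thesis
      proof (cases rule: E_col_cases)
        case (1 u v) then show ?thesis using that(3) c by blast
      next
        case (2 v) then show ?thesis using that(4) c by blast
      qed
    qed
  qed
  have card_e: "card e = 2" if "e \<in> M" for e
  proof -
    have "e \<in> edgesG d V T s m p C2" using ME that by blast
    then show ?thesis by (rule edge_cases) (auto simp: Bset_def)
  qed
  have Orig_not_bot: "Orig v \<notin> e" if "e \<in> E_bot V C2" for e v
    using that by (auto simp: E_bot_def Bset_def)
  have Bv_not_col: "Bv i \<notin> e" if "e \<in> E_col d V T s c" for e i c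
    using that by (cases rule: E_col_cases) auto
  have col_not_bot: "e \<notin> E_bot V C2" if "e \<in> E_col d V T s c" for e c
    using that
  proof (cases rule: E_col_cases)
    case (1 u v) then show ?thesis using Orig_not_bot[of e u] by auto
  next
    case (2 v) then show ?thesis using Orig_not_bot[of e v] by auto
  qed
  define Mb where "Mb = {e\<in>M. e \<in> E_bot V C2}"
  define Mc where "Mc = M - Mb"
  have cardVs: "card Vs = 2 * card V + 2 * C2"
  proof -
    have i1: "inj_on Orig V" "inj_on Copy V" "inj_on Bv {..<2*C2}" by (auto simp: inj_on_def)
    have "card Vs = card (Orig ` V \<union> Copy ` V) + card (Bv ` {..<2*C2})"
      unfolding Vs_def vertsG_def Bset_def by (rule card_Un_disjoint) (use fin in auto)
    also have "card (Orig ` V \<union> Copy ` V) = card (Orig ` V) + card (Copy ` V)"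
      by (rule card_Un_disjoint) (use fin in auto)
    finally show ?thesis using i1 by (simp add: card_image)
  qed
  have cardM: "card M = card V + C2"
  proof -
    have "card Vs = sum card M" unfolding MU[symmetric]
      by (rule card_Union_disjoint) (use Mdisj finVs MU in \<open>auto simp: pairwise_def disjnt_def intro: finite_subset\<close>)
    also have "\<dots> = sum (\<lambda>e. 2) M" by (rule sum.cong) (auto simp: card_e)
    finally show ?thesis using cardVs by simp
  qed
  have Mb_sub: "Mb \<subseteq> M" by (auto simp: Mb_def)
  have cardMb: "card Mb = 2 * C2"
  proof -
    have cB: "card (Bset C2) = 2 * C2" by (simp add: Bset_def card_image inj_on_def)
    have BU: "Bset C2 = (\<Union>e\<in>M. e \<inter> Bset C2)"
      using MU by (auto simp: Vs_def vertsG_def)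
    have "card (Bset C2) = (\<Sum>e\<in>M. card (e \<inter> Bset C2))"
      by (subst BU, rule card_UN_disjoint) (use finM Mdisj in \<open>auto simp: Bset_def\<close>)
    also have "\<dots> = (\<Sum>e\<in>M. of_bool (e \<in> Mb))"
    proof (rule sum.cong)
      fix e assume eM: "e \<in> M"
      then have eE: "e \<in> edgesG d V T s m p C2" using ME by blast
      show "card (e \<inter> Bset C2) = of_bool (e \<in> Mb)"
      proof (cases "e \<in> E_bot V C2")
        case True
        then obtain v b where "e = {Copy v, b}" "b \<in> Bset C2" by (auto simp: E_bot_def)
        then have "e \<inter> Bset C2 = {b}" by (auto simp: Bset_def)
        then show ?thesis using True eM by (simp add: Mb_def)
      next
        case False
        then obtain c where "e \<in> E_col d V T s c" using eE unfolding edgesG_def by blast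
        then have "e \<inter> Bset C2 = {}" using Bv_not_col by (auto simp: Bset_def)
        then show ?thesis using False by (simp add: Mb_def)
      qed
    qed simp
    also have "\<dots> = card (M \<inter> {e. e \<in> Mb})" using finM by simp
    also have "M \<inter> {e. e \<in> Mb} = Mb" using Mb_sub by auto
    finally show ?thesis using cB by simp
  qed
  have cardMc: "card Mc = m"
  proof -
    have "card Mc = card M - card Mb" unfolding Mc_def by (rule card_Diff_subset) (use finM Mb_sub finite_subset in auto)
    then show ?thesis using cardM cardMb m1 m2 by (simp add: C2_def)
  qed
  have xi_Mb: "\<xi> e = Bot" if "e \<in> Mb" for e
  proof (rule ccontr)
    assume nb: "\<xi> e \<noteq> Bot"
    have "e \<in> M" "e \<in> E_bot V C2" using that by (auto simp: Mb_def)
    then have "e \<in> Ec d V T s C2 (\<xi> e)" using xl by (auto simp: lamG_def)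
    then have "e \<in> E_col d V T s (\<xi> e)" using nb by (simp add: Ec_def)
    then show False using col_not_bot \<open>e \<in> E_bot V C2\<close> by blast
  qed
  have xi_Mc: "\<xi> e \<in> colorsC m p \<and> e \<in> E_col d V T s (\<xi> e)" if "e \<in> Mc" for e
  proof -
    have eM: "e \<in> M" "e \<notin> E_bot V C2" using that by (auto simp: Mc_def Mb_def)
    then have l: "\<xi> e \<in> colorsC' m p C2" "e \<in> Ec d V T s C2 (\<xi> e)" using xl by (auto simp: lamG_def)
    have nb: "\<xi> e \<noteq> Bot" using l(2) eM(2) by (auto simp: Ec_def)
    have "Bot \<notin> colorsC m p" by (auto simp: colorsC_def split: if_splits)
    then show ?thesis using l nb by (auto simp: colorsC'_def Ec_def split: if_splits)
  qed
  have xi_Mc_img: "\<exists>e\<in>Mc. \<xi> e = c" if "c \<in> colorsC m p" for c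
  proof -
    have "c \<in> \<xi> ` M" using xi that by (simp add: colorsC'_def)
    then obtain e where e: "e \<in> M" "\<xi> e = c" by blast
    have "c \<noteq> Bot" using that by (auto simp: colorsC_def split: if_splits)
    then have "e \<in> Mc" using e xi_Mb by (auto simp: Mc_def)
    then show ?thesis using e by blast
  qed
  define g where "g i = (SOME e. e \<in> Mc \<and> \<xi> e = Col i)" for i
  have g: "g i \<in> Mc \<and> \<xi> (g i) = Col i" if "i \<in> {1..p}" for i
  proof -
    have "Col i \<in> colorsC m p" using that by (simp add: colorsC_def)
    then have "\<exists>e. e \<in> Mc \<and> \<xi> e = Col i" using xi_Mc_img by blast
    then show ?thesis unfolding g_def by (rule someI_ex)
  qed
  have g_inj: "inj_on g {1..p}"
    by (rule inj_onI) (metis g color.inject)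
  define R where "R = Mc - g ` {1..p}"
  have finMc: "finite Mc" using finM by (simp add: Mc_def)
  have gsub: "g ` {1..p} \<subseteq> Mc" using g by auto
  have cardR: "card R = m - p"
  proof -
    have "card R = card Mc - card (g ` {1..p})" unfolding R_def
      by (rule card_Diff_subset) (use gsub finMc finite_subset in auto)
    then show ?thesis using cardMc card_image[OF g_inj] by simp
  qed
  obtain h where h: "bij_betw h {p+1..m} R"
  proof -
    have "card {p+1..m} = card R" using cardR by simp
    then show ?thesis using finite_same_card_bij[of "{p+1..m}" R] that finMc by (auto simp: R_def)
  qed
  define \<phi> where "\<phi> k = (if k \<le> p then g k else h k)" for k
  have phi_bij: "bij_betw \<phi> {1..m} Mc"
  proof -
    have e1: "bij_betw \<phi> {1..p} (g ` {1..p}) = bij_betw g {1..p} (g ` {1..p})"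
      by (rule bij_betw_cong) (simp add: \<phi>_def)
    have b1: "bij_betw \<phi> {1..p} (g ` {1..p})"
      using inj_on_imp_bij_betw[OF g_inj] e1 by simp
    have e2: "bij_betw \<phi> {p+1..m} R = bij_betw h {p+1..m} R"
      by (rule bij_betw_cong) (simp add: \<phi>_def)
    have b2: "bij_betw \<phi> {p+1..m} R"
      using h e2 by simp
    have "bij_betw \<phi> ({1..p} \<union> {p+1..m}) (g ` {1..p} \<union> R)"
      by (rule bij_betw_combine[OF b1 b2]) (unfold R_def, blast)
    moreover have "{1..p} \<union> {p+1..m} = {1..m}" using pm by auto
    moreover have "g ` {1..p} \<union> R = Mc" using gsub unfolding R_def by blast
    ultimately show ?thesis by metis
  qed
  have phi_Mc: "\<phi> k \<in> Mc" if "k \<in> {1..m}" for k using phi_bij that by (meson bij_betwE)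
  have phi_inj: "k = k'" if "k \<in> {1..m}" "k' \<in> {1..m}" "\<phi> k = \<phi> k'" for k k'
    using bij_betw_imp_inj_on[OF phi_bij] that by (meson inj_onD)
  have phi_col: "\<xi> (\<phi> k) = Col k" if "k \<in> {1..p}" for k using g that by (simp add: \<phi>_def)
  have Orig_ex: "\<exists>k\<in>{1..m}. Orig v \<in> \<phi> k" if v: "v \<in> V" for v
  proof -
    have "Orig v \<in> Vs" using v by (simp add: Vs_def vertsG_def)
    then obtain e where e: "e \<in> M" "Orig v \<in> e" using MU by blast
    then have "e \<notin> Mb" using Orig_not_bot by (auto simp: Mb_def)
    then have "e \<in> Mc" using e by (simp add: Mc_def)
    then have "e \<in> \<phi> ` {1..m}" using phi_bij by (simp add: bij_betw_def)
    then show ?thesis using e by blast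
  qed
  have Orig_uniq: "k = k'" if "k \<in> {1..m}" "k' \<in> {1..m}" "Orig v \<in> \<phi> k" "Orig v \<in> \<phi> k'" for k k' v
  proof -
    have "\<phi> k \<in> M" "\<phi> k' \<in> M" using phi_Mc that by (auto simp: Mc_def)
    then have "\<phi> k = \<phi> k'" using Mdisj that by blast
    then show ?thesis using phi_inj that by blast
  qed
  define F where "F v = (SOME k. k \<in> {1..m} \<and> Orig v \<in> \<phi> k)" for v
  have F1: "F v \<in> {1..m} \<and> Orig v \<in> \<phi> (F v)" if "v \<in> V" for v
    unfolding F_def by (rule someI_ex) (use Orig_ex[OF that] in blast)
  have F_iff: "F v = k \<longleftrightarrow> Orig v \<in> \<phi> k" if "v \<in> V" "k \<in> {1..m}" for v k
    using F1[OF that(1)] Orig_uniq that by blast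
  have cap_le: "vle d (cap T s (\<xi> (\<phi> k))) (container_cap T s p k)" if k: "k \<in> {1..m}" for k
  proof (cases "k \<le> p")
    case True
    then have "\<xi> (\<phi> k) = Col k" using phi_col k by simp
    then show ?thesis using True by (simp add: cap_def container_cap_def vle_refl)
  next
    case False
    have "\<xi> (\<phi> k) \<in> colorsC m p" using xi_Mc phi_Mc k by blast
    then show ?thesis using False sT by (auto simp: colorsC_def cap_def container_cap_def vle_refl split: if_splits)
  qed
  show ?thesis unfolding feasible_assignment_def
  proof (intro exI[of _ F] conjI ballI)
    fix v assume "v \<in> V" then show "F v \<in> {1..m}" using F1 by blast
  next
    show "F ` V = {1..m}"
    proof
      show "F ` V \<subseteq> {1..m}" using F1 by blast
    next
      show "{1..m} \<subseteq> F ` V"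
      proof
        fix k assume k: "k \<in> {1..m}"
        have "\<phi> k \<in> E_col d V T s (\<xi> (\<phi> k))" using xi_Mc phi_Mc k by blast
        then obtain u where u: "u \<in> V" "Orig u \<in> \<phi> k" by (cases rule: E_col_cases) auto
        then have "F u = k" using F_iff k by blast
        then show "k \<in> F ` V" using u by blast
      qed
    qed
  next
    fix k assume k: "k \<in> {1..m}"
    have S: "{v\<in>V. F v = k} = {v\<in>V. Orig v \<in> \<phi> k}" using F_iff k by blast
    have cl: "vle d (cap T s (\<xi> (\<phi> k))) (container_cap T s p k)" using cap_le k by blast
    have "\<phi> k \<in> E_col d V T s (\<xi> (\<phi> k))" using xi_Mc phi_Mc k by blast
    then show "vle d (vsum d {v\<in>V. F v = k}) (container_cap T s p k)"
    proof (cases rule: E_col_cases)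
      case (1 u w)
      then have "{v\<in>V. Orig v \<in> \<phi> k} = {u, w}" by auto
      then show ?thesis using 1 S cl by (simp add: vle_pair vle_trans)
    next
      case (2 w)
      then have "{v\<in>V. Orig v \<in> \<phi> k} = {w}" by auto
      then show ?thesis using 2 S cl by (simp add: vle_single vle_trans)
    qed
  qed
qed

theorem lemma6:
  fixes d m p :: nat and T :: "rat list" and V :: "rat list set" and s :: "nat \<Rightarrow> rat list"
  assumes "d \<ge> 1"
    and "vec_nonneg d T"
    and "finite V"
    and "\<forall>v\<in>V. vec_nonneg d v"
    and "three_incompatible d V T"
    and "card V \<le> 2 * m" and "m \<le> card V"
    and "p \<le> m"
    and "\<forall>i\<in>{1..p}. vec_nonneg d (s i) \<and> vle d (s i) T"
  shows "feasible_assignment d V T s m p \<longleftrightarrow>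
         otr_yes (vertsG V (card V - m)) (edgesG d V T s m p (card V - m))
                 (colorsC' m p (card V - m)) (lamG d V T s m p (card V - m))
                 (\<lambda>e c. 1) (of_nat (card V + (card V - m)))"
proof
  assume "feasible_assignment d V T s m p"
  then obtain f where f: "\<forall>v\<in>V. f v \<in> {1..m}" "f ` V = {1..m}"
    "\<forall>k\<in>{1..m}. vle d (vsum d {v\<in>V. f v = k}) (container_cap T s p k)"
    unfolding feasible_assignment_def by blast
  show "otr_yes (vertsG V (card V - m)) (edgesG d V T s m p (card V - m))
                 (colorsC' m p (card V - m)) (lamG d V T s m p (card V - m))
                 (\<lambda>e c. 1) (of_nat (card V + (card V - m)))"
    by (rule fwd[OF assms(3,4,5,6,7,8,9) f])
next
  assume "otr_yes (vertsG V (card V - m)) (edgesG d V T s m p (card V - m))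
                 (colorsC' m p (card V - m)) (lamG d V T s m p (card V - m))
                 (\<lambda>e c. 1) (of_nat (card V + (card V - m)))"
  then show "feasible_assignment d V T s m p"
    by (rule bwd[OF assms(3,4,6,7,8,9)])
qed

end
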